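(* Fix $L>0$. There exists $C>0$ such that for all $u^0\in H^6(0,L)$ with $u^0,Pu^0,P^2u^0\in\mathrm{Dom}(P)$, all $\delta t\in(0,1)$ and $J\ge2$ with $\delta t/\delta x^2\le1/2$, and all $n\ge1$, $$\Big\|\sum_{k=0}^{n-1}(\mathrm{Id}+\delta t\,\mathsf P_\delta)^{n-1-k}\varepsilon_2^k\Big\|_{\ell^2}\le C\,\delta t\,\|P^2u^0\|_{H^1},$$ where $u$ is the solution of $\partial_tu=Pu$, $u(0)=u^0$, and $\varepsilon_2^k=\int_{k\delta t}^{(k+1)\delta t}((k+1)\delta t-s)\,\Pi_{\delta x}P^2u(s)\,ds$.
   Context: $P=\partial_x^2$ with homogeneous Neumann conditions on $(0,L)$, $\mathrm{Dom}(P)=\{u\in L^2:\partial_x^2u\in L^2,\ \partial_xu(0)=\partial_xu(L)=0\}$; the solution is $u(t)=\sum_{p\ge0}\alpha_pe^{-p^2\pi^2t/L^2}c_p$ with $c_0=1$, $c_p=\sqrt2\cos(p\pi x/L)$, $\alpha_p=\frac1L\int_0^Lu^0c_p$. For $J\ge2$: $\delta x=L/(J-1)$, $x_j=j\delta x$, $\|\mathsf v\|_{\ell^2}^2=\frac1J\sum_j\mathsf v_j^2$, $\Pi_{\delta x}w=(w(x_j))_{0\le j\le J-1}$, $\mathsf P_\delta=\frac1{\delta x^2}\times$ the tridiagonal $J\times J$ matrix with diagonal $(-1,-2,\dots,-2,-1)$ and off-diagonals $1$. $\|\cdot\|_{H^1}$ is the standard $H^1(0,L)$ norm. *)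

theory Defs
  imports "HOL-Analysis.Analysis"
begin

text \<open>Neumann eigenbasis on (0,L): c_0 = 1, c_p = sqrt 2 cos(p pi x / L).\<close>
definition cbasis :: "real \<Rightarrow> nat \<Rightarrow> real \<Rightarrow> real" where
  "cbasis L p x = (if p = 0 then 1 else sqrt 2 * cos (real p * pi * x / L))"

definition alpha_coef :: "real \<Rightarrow> (real \<Rightarrow> real) \<Rightarrow> nat \<Rightarrow> real" where
  "alpha_coef L u0 p = (1 / L) * (LBINT x=0..L. u0 x * cbasis L p x)"

definition heat_sol :: "real \<Rightarrow> (real \<Rightarrow> real) \<Rightarrow> real \<Rightarrow> real \<Rightarrow> real" where
  "heat_sol L u0 t x =
     (\<Sum>p. alpha_coef L u0 p * exp (- ((real p)^2 * pi^2 * t / L^2)) * cbasis L p x)"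

definition P2_sol :: "real \<Rightarrow> (real \<Rightarrow> real) \<Rightarrow> real \<Rightarrow> real \<Rightarrow> real" where
  "P2_sol L u0 s x = (deriv ^^ 4) (heat_sol L u0 s) x"

text \<open>u0 in H^6(0,L): d 0 = u0 on [0,L], d k classical derivatives of order k < 6 on [0,L]
  (one-sided at the end points), d 5 absolutely continuous with derivative d 6 in L^2(0,L).\<close>
definition H6_chain :: "real \<Rightarrow> (real \<Rightarrow> real) \<Rightarrow> (nat \<Rightarrow> real \<Rightarrow> real) \<Rightarrow> bool" where
  "H6_chain L u0 d \<longleftrightarrow>
     (\<forall>x\<in>{0..L}. d 0 x = u0 x) \<and>
     (\<forall>k<5. \<forall>x\<in>{0..L}. (d k has_real_derivative d (Suc k) x) (at x within {0..L})) \<and>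
     set_integrable lborel {0..L} (d 6) \<and>
     set_integrable lborel {0..L} (\<lambda>x. (d 6 x)^2) \<and>
     (\<forall>x\<in>{0..L}. d 5 x = d 5 0 + (LBINT t=0..x. d 6 t))"

text \<open>u0, P u0, P^2 u0 in Dom(P): homogeneous Neumann conditions.\<close>
definition dom_conditions :: "real \<Rightarrow> (nat \<Rightarrow> real \<Rightarrow> real) \<Rightarrow> bool" where
  "dom_conditions L d \<longleftrightarrow>
     d 1 0 = 0 \<and> d 1 L = 0 \<and> d 3 0 = 0 \<and> d 3 L = 0 \<and> d 5 0 = 0 \<and> d 5 L = 0"

definition H1_norm_P2 :: "real \<Rightarrow> (nat \<Rightarrow> real \<Rightarrow> real) \<Rightarrow> real" where
  "H1_norm_P2 L d = sqrt ((LBINT x=0..L. (d 4 x)^2) + (LBINT x=0..L. (d 5 x)^2))"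

definition dxJ :: "real \<Rightarrow> nat \<Rightarrow> real" where
  "dxJ L J = L / (real J - 1)"

text \<open>Discrete vectors of length J represented as nat \<Rightarrow> real (indices j < J).\<close>
definition l2norm :: "nat \<Rightarrow> (nat \<Rightarrow> real) \<Rightarrow> real" where
  "l2norm J v = sqrt ((1 / real J) * (\<Sum>j<J. (v j)^2))"

definition Pmat :: "nat \<Rightarrow> real \<Rightarrow> nat \<Rightarrow> nat \<Rightarrow> real" where
  "Pmat J dx i j =
     (if i = j then (if i = 0 \<or> i = J - 1 then -1 else -2)
      else if i = Suc j \<or> j = Suc i then 1 else 0) / dx^2"

definition mat_apply :: "nat \<Rightarrow> (nat \<Rightarrow> nat \<Rightarrow> real) \<Rightarrow> (nat \<Rightarrow> real) \<Rightarrow> nat \<Rightarrow> real" where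
  "mat_apply J A v i = (\<Sum>j<J. A i j * v j)"

definition euler_step :: "nat \<Rightarrow> real \<Rightarrow> real \<Rightarrow> (nat \<Rightarrow> real) \<Rightarrow> nat \<Rightarrow> real" where
  "euler_step J dx dt v i = v i + dt * mat_apply J (Pmat J dx) v i"

definition eps2 :: "real \<Rightarrow> (real \<Rightarrow> real) \<Rightarrow> nat \<Rightarrow> real \<Rightarrow> nat \<Rightarrow> nat \<Rightarrow> real" where
  "eps2 L u0 J dt k j =
     (LBINT s=real k * dt..real (Suc k) * dt.
        (real (Suc k) * dt - s) * P2_sol L u0 s (real j * dxJ L J))"

end

theory Submission
  imports Defs
begin

lemma Pmat_rowsum:
  assumes J: "J \<ge> 2" and i: "i < J"
  shows "(\<Sum>j<J. Pmat J dx i j) = 0"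
proof -
  define D where "D = (if i = 0 \<or> i = J - 1 then -1 else -2::real)"
  have eq: "Pmat J dx i j = ((if j = i then D else 0) + (if 0 < i \<and> j = i - 1 then 1 else 0)
      + (if j = Suc i then 1 else 0)) / dx^2" for j
    unfolding Pmat_def D_def by auto
  have "(\<Sum>j<J. Pmat J dx i j) = ((\<Sum>j<J. (if j = i then D else 0)) + (\<Sum>j<J. (if 0 < i \<and> j = i - 1 then 1 else 0))
      + (\<Sum>j<J. (if j = Suc i then 1 else 0))) / dx^2"
    unfolding eq by (simp add: sum_divide_distrib[symmetric] sum.distrib)
  also have "\<dots> = (D + (if 0 < i then 1 else 0) + (if Suc i < J then 1 else 0)) / dx^2"
    using i by (simp add: sum.delta' sum.If_cases)
  also have "\<dots> = 0" using i J unfolding D_def by auto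
  finally show ?thesis .
qed

lemma euler_stable:
  assumes J: "J \<ge> 2" and dt: "0 \<le> dt" and r: "dt / dx^2 \<le> 1/2" and dx: "dx \<noteq> 0"
    and v: "\<And>j. j < J \<Longrightarrow> \<bar>v j\<bar> \<le> M" and i: "i < J"
  shows "\<bar>euler_step J dx dt v i\<bar> \<le> M"
proof -
  define c where "c j = (if j = i then 1 else 0) + dt * Pmat J dx i j" for j
  have dx2: "dx^2 > 0" using dx by simp
  have c_nn: "c j \<ge> 0" for j
  proof -
    have "dt * 2 / dx^2 \<le> 1" using r by (simp add: field_simps)
    then have "dt * 2 \<le> dx^2" using dx2 by (simp add: field_simps)
    then show ?thesis using dt dx2 unfolding c_def Pmat_def
      by (auto simp: field_simps)
  qed
  have "euler_step J dx dt v i = (\<Sum>j<J. c j * v j)"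
  proof -
    have "(\<Sum>j<J. c j * v j) = (\<Sum>j<J. (if j = i then v j else 0)) + (\<Sum>j<J. dt * (Pmat J dx i j * v j))"
    proof -
      have "c j * v j = (if j = i then v j else 0) + dt * (Pmat J dx i j * v j)" for j
        unfolding c_def by (simp add: distrib_right)
      then show ?thesis by (simp add: sum.distrib)
    qed
    also have "\<dots> = v i + dt * (\<Sum>j<J. Pmat J dx i j * v j)" using i by (simp add: sum_distrib_left)
    finally show ?thesis unfolding euler_step_def mat_apply_def by simp
  qed
  also have "\<bar>\<dots>\<bar> \<le> (\<Sum>j<J. c j * M)"
    by (rule order_trans[OF sum_abs]) (auto intro!: sum_mono mult_left_mono v simp: abs_mult c_nn)
  also have "\<dots> = M * (\<Sum>j<J. c j)" by (simp add: sum_distrib_left mult.commute)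
  also have "(\<Sum>j<J. c j) = 1"
    unfolding c_def using i Pmat_rowsum[OF J i, of dx]
    by (simp add: sum.distrib sum_distrib_left[symmetric])
  finally show ?thesis by simp
qed

lemma euler_stable_pow:
  assumes J: "J \<ge> 2" and dt: "0 \<le> dt" and r: "dt / dx^2 \<le> 1/2" and dx: "dx \<noteq> 0"
    and v: "\<And>j. j < J \<Longrightarrow> \<bar>v j\<bar> \<le> M"
  shows "\<And>i. i < J \<Longrightarrow> \<bar>((euler_step J dx dt)^^m) v i\<bar> \<le> M"
proof (induction m)
  case 0 then show ?case using v by simp
next
  case (Suc m) then show ?case using euler_stable[OF J dt r dx] by simp
qed

lemma l2norm_le:
  assumes "J > 0" "\<And>j. j < J \<Longrightarrow> \<bar>v j\<bar> \<le> M"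
  shows "l2norm J v \<le> M"
proof -
  have M: "M \<ge> 0" using assms(2)[of 0] assms(1) by simp
  have "(\<Sum>j<J. (v j)^2) \<le> (\<Sum>j<J. M^2)"
    by (intro sum_mono) (metis abs_le_square_iff abs_of_nonneg M assms(2) lessThan_iff)
  then have "(1 / real J) * (\<Sum>j<J. (v j)^2) \<le> M^2" using assms(1) by (simp add: field_simps)
  then show ?thesis unfolding l2norm_def using M real_sqrt_le_mono by fastforce
qed

lemma exp_neg_le: fixes y :: real assumes "y > 0" shows "exp (-y) \<le> 27 / y^3"
proof -
  have "y / 3 \<le> exp (y/3)" using exp_ge_add_one_self[of "y/3"] by linarith
  then have "(y/3)^3 \<le> exp (y/3) ^ 3" using assms by (intro power_mono) auto
  also have "exp (y/3) ^ 3 = exp y" by (simp add: exp_of_nat_mult[symmetric])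
  finally have "y^3 / 27 \<le> exp y" by (simp add: power_divide)
  then show ?thesis using assms by (simp add: exp_minus field_simps)
qed

lemma summable_inv_sq: "summable (\<lambda>p. inverse (real p ^ 2))"
  using inverse_power_summable[of 2, where 'a=real] by simp

lemma summable_exp_poly:
  assumes c: "c > 0" and s: "s > 0" and m: "m \<le> 4"
  shows "summable (\<lambda>p. (c * real p)^m * exp (-((c * real p)^2 * s)))"
proof (rule summable_comparison_test')
  define K where "K = 27 / (s^3 * c^2) + 27 / (s^3 * c^6)"
  show "summable (\<lambda>p. K * inverse (real p ^ 2))" using summable_inv_sq by (rule summable_mult)
  fix p :: nat assume p: "p \<ge> 1"
  define x where "x = c * real p"
  have x0: "x > 0" using p c by (simp add: x_def)
  have e: "exp (-(x^2 * s)) \<le> 27 / (x^2 * s)^3" using x0 s by (intro exp_neg_le) simp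
  have xm: "x^m \<le> 1 + x^4"
  proof (cases "x \<le> 1")
    case True then have "x^m \<le> 1" using x0 by (simp add: power_le_one)
    then show ?thesis by (simp add: add_increasing2)
  next
    case False then have "x^m \<le> x^4" using m by (intro power_increasing) auto
    then show ?thesis by simp
  qed
  have "norm (x^m * exp (-(x^2 * s))) = x^m * exp (-(x^2 * s))" using x0 by simp
  also have "\<dots> \<le> (1 + x^4) * (27 / (x^2 * s)^3)"
    using xm e x0 by (intro mult_mono) auto
  also have "\<dots> = 27 / (s^3 * x^6) + 27 / (s^3 * x^2)" using x0 s
    by (simp add: field_simps power_mult_distrib)
  also have "\<dots> \<le> K * inverse (real p ^ 2)"
  proof -
    have p2: "real p ^ 2 \<le> real p ^ 6" using p by (intro power_increasing) auto
    have "27 / (s^3 * x^6) = 27 / (s^3 * c^6) / real p ^ 6" unfolding x_def by (simp add: power_mult_distrib)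
    also have "\<dots> \<le> 27 / (s^3 * c^6) / real p ^ 2" using p p2 s c
      by (intro divide_left_mono) auto
    finally have 1: "27 / (s^3 * x^6) \<le> 27 / (s^3 * c^6) / real p ^ 2" .
    have 2: "27 / (s^3 * x^2) = 27 / (s^3 * c^2) / real p ^ 2" unfolding x_def by (simp add: power_mult_distrib)
    have 3: "K * inverse (real p ^ 2) = 27 / (s^3 * c^2) / real p ^ 2 + 27 / (s^3 * c^6) / real p ^ 2"
      unfolding K_def by (simp add: divide_inverse distrib_right)
    show ?thesis using 1 2 3 by linarith
  qed
  finally show "norm ((c * real p)^m * exp (-((c * real p)^2 * s))) \<le> K * inverse (real p ^ 2)"
    unfolding x_def .
qed

lemma D_cos:
  fixes b a :: "nat \<Rightarrow> real"
  assumes "summable (\<lambda>p. \<bar>b p\<bar>)" "summable (\<lambda>p. \<bar>b p * a p\<bar>)"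
  shows "deriv (\<lambda>x. \<Sum>p. b p * cos (a p * x)) = (\<lambda>x. \<Sum>p. - (b p * a p) * sin (a p * x))"
proof
  fix x :: real
  have "((\<lambda>x. \<Sum>p. b p * cos (a p * x)) has_field_derivative (\<Sum>p. - (b p * a p) * sin (a p * x))) (at x)"
  proof (rule has_field_derivative_series'(2)[where S=UNIV and f="\<lambda>n x. b n * cos (a n * x)" and f'="\<lambda>n x. - (b n * a n) * sin (a n * x)"])
    show "convex (UNIV::real set)" by simp
    show "((\<lambda>x. b n * cos (a n * x)) has_field_derivative - (b n * a n) * sin (a n * x)) (at x)" for n x
      by (auto intro!: derivative_eq_intros)
    have "uniform_limit UNIV (\<lambda>n x. \<Sum>i<n. - (b i * a i) * sin (a i * x)) (\<lambda>x. \<Sum>i. - (b i * a i) * sin (a i * x)) sequentially"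
      by (rule Weierstrass_m_test[where M="\<lambda>p. \<bar>b p * a p\<bar>"]) (use assms(2) in \<open>auto simp: abs_mult intro!: mult_left_le\<close>)
    then show "uniformly_convergent_on UNIV (\<lambda>n x. \<Sum>i<n. - (b i * a i) * sin (a i * x))"
      unfolding uniformly_convergent_on_def by blast
    show "summable (\<lambda>n. b n * cos (a n * 0))" using summable_rabs_cancel[OF assms(1)] by simp
  qed auto
  then show "deriv (\<lambda>x. \<Sum>p. b p * cos (a p * x)) x = (\<Sum>p. - (b p * a p) * sin (a p * x))"
    by (rule DERIV_imp_deriv)
qed

lemma D_sin:
  fixes b a :: "nat \<Rightarrow> real"
  assumes "summable (\<lambda>p. \<bar>b p\<bar>)" "summable (\<lambda>p. \<bar>b p * a p\<bar>)"
  shows "deriv (\<lambda>x. \<Sum>p. b p * sin (a p * x)) = (\<lambda>x. \<Sum>p. (b p * a p) * cos (a p * x))"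
proof
  fix x :: real
  have "((\<lambda>x. \<Sum>p. b p * sin (a p * x)) has_field_derivative (\<Sum>p. (b p * a p) * cos (a p * x))) (at x)"
  proof (rule has_field_derivative_series'(2)[where S=UNIV and f="\<lambda>n x. b n * sin (a n * x)" and f'="\<lambda>n x. (b n * a n) * cos (a n * x)"])
    show "convex (UNIV::real set)" by simp
    show "((\<lambda>x. b n * sin (a n * x)) has_field_derivative (b n * a n) * cos (a n * x)) (at x)" for n x
      by (auto intro!: derivative_eq_intros)
    have "uniform_limit UNIV (\<lambda>n x. \<Sum>i<n. (b i * a i) * cos (a i * x)) (\<lambda>x. \<Sum>i. (b i * a i) * cos (a i * x)) sequentially"
      by (rule Weierstrass_m_test[where M="\<lambda>p. \<bar>b p * a p\<bar>"]) (use assms(2) in \<open>auto simp: abs_mult intro!: mult_left_le\<close>)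
    then show "uniformly_convergent_on UNIV (\<lambda>n x. \<Sum>i<n. (b i * a i) * cos (a i * x))"
      unfolding uniformly_convergent_on_def by blast
    show "summable (\<lambda>n. b n * sin (a n * 0))" by simp
  qed auto
  then show "deriv (\<lambda>x. \<Sum>p. b p * sin (a p * x)) x = (\<Sum>p. (b p * a p) * cos (a p * x))"
    by (rule DERIV_imp_deriv)
qed

lemma D4:
  fixes b a :: "nat \<Rightarrow> real"
  assumes S: "\<And>m. m \<le> 4 \<Longrightarrow> summable (\<lambda>p. \<bar>b p\<bar> * \<bar>a p\<bar>^m)"
  shows "(deriv ^^ 4) (\<lambda>x. \<Sum>p. b p * cos (a p * x)) = (\<lambda>x. \<Sum>p. (b p * a p^4) * cos (a p * x))"
proof -
  have S': "summable (\<lambda>p. \<bar>b p * a p ^ m\<bar>)" if "m \<le> 4" for m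
    using S[OF that] by (simp add: abs_mult power_abs)
  define b1 where "b1 p = - (b p * a p)" for p
  define b2 where "b2 p = b1 p * a p" for p
  define b3 where "b3 p = - (b2 p * a p)" for p
  have e2: "\<bar>b2 p\<bar> = \<bar>b p * a p ^ 2\<bar>" for p unfolding b2_def b1_def by (simp add: abs_mult power2_eq_square)
  have e3: "\<bar>b3 p\<bar> = \<bar>b p * a p ^ 3\<bar>" for p unfolding b3_def b2_def b1_def by (simp add: abs_mult power3_eq_cube)
  have e4: "\<bar>b3 p * a p\<bar> = \<bar>b p * a p ^ 4\<bar>" for p unfolding b3_def b2_def b1_def by (simp add: abs_mult eval_nat_numeral)
  have s0: "summable (\<lambda>p. \<bar>b p\<bar>)" using S'[of 0] by simp
  have s1: "summable (\<lambda>p. \<bar>b p * a p\<bar>)" using S'[of 1] by simp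
  have s1': "summable (\<lambda>p. \<bar>b1 p\<bar>)" using s1 by (simp add: b1_def)
  have s2: "summable (\<lambda>p. \<bar>b1 p * a p\<bar>)" using S'[of 2] e2 by (simp add: b2_def)
  have s2': "summable (\<lambda>p. \<bar>b2 p\<bar>)" using S'[of 2] e2 by simp
  have s3: "summable (\<lambda>p. \<bar>b2 p * a p\<bar>)" using S'[of 3] e3 by (simp add: b3_def)
  have s3': "summable (\<lambda>p. \<bar>b3 p\<bar>)" using S'[of 3] e3 by simp
  have s4: "summable (\<lambda>p. \<bar>b3 p * a p\<bar>)" using S'[of 4] e4 by simp
  have "(deriv ^^ 4) (\<lambda>x. \<Sum>p. b p * cos (a p * x)) = deriv (deriv (deriv (deriv (\<lambda>x. \<Sum>p. b p * cos (a p * x)))))"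
    by (simp add: eval_nat_numeral)
  also have "deriv (\<lambda>x. \<Sum>p. b p * cos (a p * x)) = (\<lambda>x. \<Sum>p. b1 p * sin (a p * x))"
    unfolding b1_def by (rule D_cos[OF s0 s1])
  also have "deriv (\<lambda>x. \<Sum>p. b1 p * sin (a p * x)) = (\<lambda>x. \<Sum>p. b2 p * cos (a p * x))"
    unfolding b2_def by (rule D_sin[OF s1' s2])
  also have "deriv (\<lambda>x. \<Sum>p. b2 p * cos (a p * x)) = (\<lambda>x. \<Sum>p. b3 p * sin (a p * x))"
    unfolding b3_def by (rule D_cos[OF s2' s3])
  also have "deriv (\<lambda>x. \<Sum>p. b3 p * sin (a p * x)) = (\<lambda>x. \<Sum>p. (b3 p * a p) * cos (a p * x))"
    by (rule D_sin[OF s3' s4])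
  also have "\<dots> = (\<lambda>x. \<Sum>p. (b p * a p^4) * cos (a p * x))"
    unfolding b3_def b2_def b1_def by (simp add: eval_nat_numeral mult.assoc)
  finally show ?thesis .
qed

lemma LB_eq:
  fixes f :: "real \<Rightarrow> real"
  assumes "a \<le> b" "continuous_on {a..b} f"
  shows "(LBINT x=a..b. f x) = integral {a..b} f"
  using interval_integral_eq_integral[OF assms(1) borel_integrable_atLeastAtMost'[OF assms(2)]] .

lemma LB_eq0:
  fixes f :: "real \<Rightarrow> real"
  assumes "0 \<le> b" "continuous_on {0..b} f"
  shows "(LBINT x=0..b. f x) = integral {0..b} f"
  using LB_eq[OF assms] by (simp add: zero_ereal_def)

lemma H6_cont:
  assumes "H6_chain L u0 d" "k < 5"
  shows "continuous_on {0..L} (d k)"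
proof -
  have "\<forall>x\<in>{0..L}. (d k has_real_derivative d (Suc k) x) (at x within {0..L})"
    using assms unfolding H6_chain_def by blast
  then show ?thesis unfolding continuous_on_eq_continuous_within
    using DERIV_continuous by blast
qed

lemma H6_deriv:
  assumes "H6_chain L u0 d" "k < 5" "x \<in> {0..L}"
  shows "(d k has_real_derivative d (Suc k) x) (at x within {0..L})"
  using assms unfolding H6_chain_def by blast

lemma ibp2:
  fixes f fa fb :: "real \<Rightarrow> real"
  assumes L: "L > 0" and p: "p > 0"
    and D1: "\<And>x. x \<in> {0..L} \<Longrightarrow> (f has_real_derivative fa x) (at x within {0..L})"
    and D2: "\<And>x. x \<in> {0..L} \<Longrightarrow> (fa has_real_derivative fb x) (at x within {0..L})"
    and c2: "continuous_on {0..L} fb"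
    and b0: "fa 0 = 0" and bL: "fa L = 0"
  shows "(real p * pi / L)^2 * integral {0..L} (\<lambda>x. f x * cos (real p * pi / L * x))
         = - integral {0..L} (\<lambda>x. fb x * cos (real p * pi / L * x))"
proof -
  define w where "w = real p * pi / L"
  have sinL: "sin (w * L) = 0" unfolding w_def using L
    by (metis mult.commute nonzero_divide_eq_eq order_less_irrefl sin_npi times_divide_eq_right)
  have c0: "continuous_on {0..L} f"
    unfolding continuous_on_eq_continuous_within using D1 DERIV_continuous by blast
  have c1: "continuous_on {0..L} fa"
    unfolding continuous_on_eq_continuous_within using D2 DERIV_continuous by blast
  have i1: "(\<lambda>x. fa x * sin (w * x)) integrable_on {0..L}"
    by (intro integrable_continuous_interval continuous_intros c1)
  have i0: "(\<lambda>x. f x * cos (w * x)) integrable_on {0..L}"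
    by (intro integrable_continuous_interval continuous_intros c0)
  have i0': "(\<lambda>x. w * (f x * cos (w * x))) integrable_on {0..L}"
    by (intro integrable_continuous_interval continuous_intros c0)
  have i1': "(\<lambda>x. - (w * (fa x * sin (w * x)))) integrable_on {0..L}"
    by (intro integrable_continuous_interval continuous_intros c1)
  have i2: "(\<lambda>x. fb x * cos (w * x)) integrable_on {0..L}"
    by (intro integrable_continuous_interval continuous_intros c2)
  have "((\<lambda>x. fa x * sin (w * x) + w * (f x * cos (w * x))) has_integral
          (f L * sin (w * L) - f 0 * sin (w * 0))) {0..L}"
  proof (rule fundamental_theorem_of_calculus)
    show "0 \<le> L" using L by simp
    fix x assume x: "x \<in> {0..L}"
    show "((\<lambda>x. f x * sin (w * x)) has_vector_derivative fa x * sin (w * x) + w * (f x * cos (w * x)))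
          (at x within {0..L})"
      unfolding has_real_derivative_iff_has_vector_derivative[symmetric]
      using D1[OF x] by (auto intro!: derivative_eq_intros simp: algebra_simps)
  qed
  then have "integral {0..L} (\<lambda>x. fa x * sin (w * x) + w * (f x * cos (w * x))) = 0"
    using sinL by (simp add: integral_unique)
  then have E1: "integral {0..L} (\<lambda>x. fa x * sin (w * x)) = - w * integral {0..L} (\<lambda>x. f x * cos (w * x))"
    using integral_add[OF i1 i0'] by simp
  have "((\<lambda>x. fb x * cos (w * x) + - (w * (fa x * sin (w * x)))) has_integral
          (fa L * cos (w * L) - fa 0 * cos (w * 0))) {0..L}"
  proof (rule fundamental_theorem_of_calculus)
    show "0 \<le> L" using L by simp
    fix x assume x: "x \<in> {0..L}"
    show "((\<lambda>x. fa x * cos (w * x)) has_vector_derivative fb x * cos (w * x) + - (w * (fa x * sin (w * x))))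
          (at x within {0..L})"
      unfolding has_real_derivative_iff_has_vector_derivative[symmetric]
      using D2[OF x] by (auto intro!: derivative_eq_intros simp: algebra_simps)
  qed
  then have "integral {0..L} (\<lambda>x. fb x * cos (w * x) + - (w * (fa x * sin (w * x)))) = 0"
    using b0 bL by (simp add: integral_unique)
  then have E2: "integral {0..L} (\<lambda>x. fb x * cos (w * x)) = w * integral {0..L} (\<lambda>x. fa x * sin (w * x))"
    using integral_add[OF i2 i1'] by simp
  show ?thesis using E1 E2 unfolding w_def[symmetric] by (simp add: power2_eq_square)
qed

lemma l1_le_l2:
  fixes f :: "real \<Rightarrow> real"
  assumes L: "L > 0" and c: "continuous_on {0..L} f"
  shows "integral {0..L} (\<lambda>x. \<bar>f x\<bar>) \<le> sqrt (L * integral {0..L} (\<lambda>x. (f x)^2))"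
proof -
  define Q where "Q = integral {0..L} (\<lambda>x. (f x)^2)"
  have iA: "(\<lambda>x. \<bar>f x\<bar>) integrable_on {0..L}" by (intro integrable_continuous_interval continuous_intros c)
  have iQ: "(\<lambda>x. (f x)^2) integrable_on {0..L}" by (intro integrable_continuous_interval continuous_intros c)
  have Q0: "Q \<ge> 0" unfolding Q_def by (intro integral_nonneg iQ) auto
  have key: "integral {0..L} (\<lambda>x. \<bar>f x\<bar>) \<le> (t * Q + L / t) / 2" if t: "t > 0" for t
  proof -
    have iB: "(\<lambda>x. (t * (f x)^2 + 1 / t) / 2) integrable_on {0..L}"
      by (intro integrable_continuous_interval continuous_intros c) (use t in auto)
    have pt: "\<bar>y\<bar> \<le> (t * y^2 + 1 / t) / 2" for y :: real
    proof -
      have "0 \<le> (t * \<bar>y\<bar> - 1)^2" by simp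
      then have "2 * t * \<bar>y\<bar> \<le> t^2 * y^2 + 1" by (simp add: power2_eq_square algebra_simps)
      then show ?thesis using t by (simp add: field_simps power2_eq_square)
    qed
    have "integral {0..L} (\<lambda>x. \<bar>f x\<bar>) \<le> integral {0..L} (\<lambda>x. (t * (f x)^2 + 1 / t) / 2)"
      by (rule integral_le[OF iA iB]) (use pt in auto)
    also have "\<dots> = (t * Q + L / t) / 2"
    proof -
      have "integral {0..L} (\<lambda>x. (t * (f x)^2 + 1 / t) / 2) = integral {0..L} (\<lambda>x. (t/2) * (f x)^2 + 1 / (2*t))"
        by (simp add: add_divide_distrib mult.commute)
      also have "\<dots> = (t/2) * Q + L / (2*t)"
      proof -
        have "(\<lambda>x. t/2 * (f x)^2) integrable_on {0..L}" by (intro integrable_continuous_interval continuous_intros c)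
        then have "integral {0..L} (\<lambda>x. (t/2) * (f x)^2 + 1 / (2*t)) = integral {0..L} (\<lambda>x. (t/2) * (f x)^2) + integral {0..L} (\<lambda>x. 1 / (2*t))"
          by (intro integral_add) auto
        also have "integral {0..L} (\<lambda>x. (t/2) * (f x)^2) = (t/2) * Q" unfolding Q_def by (rule integral_mult_right)
        also have "integral {0..L} (\<lambda>x. 1 / (2*t)) = L / (2*t)" using L by simp
        finally show ?thesis .
      qed
      finally show ?thesis by (simp add: field_simps)
    qed
    finally show ?thesis .
  qed
  show ?thesis
  proof (cases "Q = 0")
    case True
    have "integral {0..L} (\<lambda>x. \<bar>f x\<bar>) \<le> 0"
    proof (rule ccontr)
      assume "\<not> ?thesis"
      then have pos: "integral {0..L} (\<lambda>x. \<bar>f x\<bar>) > 0" by simp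
      define t where "t = L / integral {0..L} (\<lambda>x. \<bar>f x\<bar>)"
      have "t > 0" using pos L by (simp add: t_def)
      from key[OF this] True have "integral {0..L} (\<lambda>x. \<bar>f x\<bar>) \<le> integral {0..L} (\<lambda>x. \<bar>f x\<bar>) / 2"
        using pos L by (simp add: t_def)
      then show False using pos by simp
    qed
    then show ?thesis unfolding Q_def[symmetric] using True by simp
  next
    case False
    then have Qp: "Q > 0" using Q0 by simp
    define t where "t = sqrt L / sqrt Q"
    have tp: "t > 0" using Qp L by (simp add: t_def)
    have sL: "sqrt L * sqrt L = L" using L by simp
    have sQ: "sqrt Q * sqrt Q = Q" using Qp by simp
    have sLp: "sqrt L > 0" "sqrt Q > 0" using L Qp by auto
    have "t * Q = sqrt (L * Q)" unfolding t_def real_sqrt_mult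
      by (metis sQ sLp(2) mult.assoc nonzero_mult_div_cancel_left times_divide_eq_left order_less_irrefl mult.commute)
    moreover have "L / t = sqrt (L * Q)" unfolding t_def real_sqrt_mult
      using sLp sL by (simp add: field_simps)
    ultimately show ?thesis using key[OF tp] unfolding Q_def by simp
  qed
qed

lemma cbasis_eq: "cbasis L p x = (if p = 0 then 1 else sqrt 2) * cos (real p * pi / L * x)"
proof -
  have "real p * pi * x / L = real p * pi / L * x" by simp
  then show ?thesis unfolding cbasis_def by simp
qed

lemma alpha_int:
  assumes L: "L > 0" and H: "H6_chain L u0 d"
  shows "alpha_coef L u0 p = (1/L) * (if p = 0 then 1 else sqrt 2) * integral {0..L} (\<lambda>x. d 0 x * cos (real p * pi / L * x))"
proof -
  have c0: "continuous_on {0..L} (d 0)" using H6_cont[OF H, of 0] by simp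
  have "(LBINT x=0..L. u0 x * cbasis L p x) = (LBINT x=0..L. (if p = 0 then 1 else sqrt 2) * (d 0 x * cos (real p * pi / L * x)))"
  proof (rule interval_integral_cong)
    fix x assume "x \<in> einterval (min 0 (ereal L)) (max 0 (ereal L))"
    then have "x \<in> {0..L}" using L by (auto simp: min_def max_def zero_ereal_def)
    then have "u0 x = d 0 x" using H unfolding H6_chain_def by auto
    then show "u0 x * cbasis L p x = (if p = 0 then 1 else sqrt 2) * (d 0 x * cos (real p * pi / L * x))"
      by (simp add: cbasis_eq)
  qed
  also have "\<dots> = integral {0..L} (\<lambda>x. (if p = 0 then 1 else sqrt 2) * (d 0 x * cos (real p * pi / L * x)))"
    using L by (intro LB_eq0) (auto intro!: continuous_intros c0)
  also have "\<dots> = (if p = 0 then 1 else sqrt 2) * integral {0..L} (\<lambda>x. d 0 x * cos (real p * pi / L * x))"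
    by (rule integral_mult_right)
  finally show ?thesis unfolding alpha_coef_def by simp
qed

lemma alpha_bounded:
  assumes L: "L > 0" and H: "H6_chain L u0 d"
  shows "\<exists>A. \<forall>p. \<bar>alpha_coef L u0 p\<bar> \<le> A"
proof -
  have c0: "continuous_on {0..L} (d 0)" using H6_cont[OF H, of 0] by simp
  define A where "A = (1/L) * sqrt 2 * integral {0..L} (\<lambda>x. \<bar>d 0 x\<bar>)"
  have "\<bar>alpha_coef L u0 p\<bar> \<le> A" for p
  proof -
    have k: "\<bar>(if p = 0 then 1 else sqrt 2)\<bar> \<le> (sqrt 2::real)" by auto
    have IB: "\<bar>integral {0..L} (\<lambda>x. d 0 x * cos (real p * pi / L * x))\<bar> \<le> integral {0..L} (\<lambda>x. \<bar>d 0 x\<bar>)"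
    proof (rule integral_norm_bound_integral[where 'a=real, unfolded real_norm_def])
      show "(\<lambda>x. d 0 x * cos (real p * pi / L * x)) integrable_on {0..L}"
        by (intro integrable_continuous_interval continuous_intros c0)
      show "(\<lambda>x. \<bar>d 0 x\<bar>) integrable_on {0..L}"
        by (intro integrable_continuous_interval continuous_intros c0)
      show "\<bar>d 0 x * cos (real p * pi / L * x)\<bar> \<le> \<bar>d 0 x\<bar>" for x
        by (simp add: abs_mult mult_left_le)
    qed
    define kap where "kap = (if p = 0 then 1 else sqrt 2::real)"
    define I where "I = integral {0..L} (\<lambda>x. d 0 x * cos (real p * pi / L * x))"
    have "\<bar>kap * I\<bar> \<le> sqrt 2 * integral {0..L} (\<lambda>x. \<bar>d 0 x\<bar>)"
      unfolding abs_mult using k IB unfolding kap_def[symmetric] I_def[symmetric] by (intro mult_mono) auto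
    then have "(1/L) * \<bar>kap * I\<bar> \<le> (1/L) * (sqrt 2 * integral {0..L} (\<lambda>x. \<bar>d 0 x\<bar>))"
      using L by (intro mult_left_mono) auto
    moreover have "\<bar>alpha_coef L u0 p\<bar> = (1/L) * \<bar>kap * I\<bar>"
      unfolding alpha_int[OF L H] kap_def[symmetric] I_def[symmetric] using L by (simp add: abs_mult)
    ultimately show ?thesis unfolding A_def by (simp add: mult.assoc)
  qed
  then show ?thesis by blast
qed

lemma alpha_d4:
  assumes L: "L > 0" and H: "H6_chain L u0 d" and Dm: "dom_conditions L d" and p: "p > 0"
  shows "alpha_coef L u0 p * (real p * pi / L)^4 = (sqrt 2 / L) * integral {0..L} (\<lambda>x. d 4 x * cos (real p * pi / L * x))"
proof -
  define w where "w = real p * pi / L"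
  define I where "I k = integral {0..L} (\<lambda>x. d k x * cos (w * x))" for k
  have "w^2 * I 0 = - I 2" unfolding I_def w_def
    by (rule ibp2[OF L p, where f="d 0" and fa="d 1" and fb="d 2"]) (use H6_deriv[OF H] H6_cont[OF H] Dm in \<open>auto simp: dom_conditions_def numeral_eq_Suc\<close>)
  moreover have "w^2 * I 2 = - I 4" unfolding I_def w_def
    by (rule ibp2[OF L p, where f="d 2" and fa="d 3" and fb="d 4"]) (use H6_deriv[OF H] H6_cont[OF H] Dm in \<open>auto simp: dom_conditions_def numeral_eq_Suc\<close>)
  ultimately have "w^4 * I 0 = I 4"
    by (metis (no_types, lifting) minus_minus mult.assoc mult_minus_right power2_eq_square power4_eq_xxxx)
  have "alpha_coef L u0 p * w^4 = (1/L) * sqrt 2 * (w^4 * I 0)"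
    unfolding alpha_int[OF L H] using p by (simp add: I_def w_def)
  also have "\<dots> = (sqrt 2 / L) * I 4" using \<open>w^4 * I 0 = I 4\<close> by simp
  finally show ?thesis unfolding I_def w_def .
qed

definition wv :: "real \<Rightarrow> nat \<Rightarrow> real" where "wv L p = real p * pi / L"
definition bet :: "real \<Rightarrow> (real \<Rightarrow> real) \<Rightarrow> nat \<Rightarrow> real" where
  "bet L u0 p = alpha_coef L u0 p * (if p = 0 then 1 else sqrt 2) * (wv L p)^4"

lemma wv_eq: "wv L p = (pi / L) * real p" unfolding wv_def by simp

lemma H_ge:
  assumes L: "L > 0" and H: "H6_chain L u0 d"
  shows "sqrt (integral {0..L} (\<lambda>x. (d 4 x)^2)) \<le> H1_norm_P2 L d" "H1_norm_P2 L d \<ge> 0"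
proof -
  have c4: "continuous_on {0..L} (d 4)" using H6_cont[OF H, of 4] by simp
  have "(LBINT x=0..L. (d 4 x)^2) = integral {0..L} (\<lambda>x. (d 4 x)^2)"
    using L by (intro LB_eq0) (auto intro!: continuous_intros c4)
  moreover have "(LBINT x=0..L. (d 5 x)^2) \<ge> 0"
    using L by (auto simp: interval_lebesgue_integral_def set_lebesgue_integral_def zero_ereal_def
        intro!: integral_nonneg_AE)
  moreover have "integral {0..L} (\<lambda>x. (d 4 x)^2) \<ge> 0"
    by (intro integral_nonneg integrable_continuous_interval continuous_intros c4) auto
  ultimately show "sqrt (integral {0..L} (\<lambda>x. (d 4 x)^2)) \<le> H1_norm_P2 L d" "H1_norm_P2 L d \<ge> 0"
    unfolding H1_norm_P2_def by simp_all
qed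

lemma bet_bound:
  assumes L: "L > 0" and H: "H6_chain L u0 d" and Dm: "dom_conditions L d"
  shows "\<bar>bet L u0 p\<bar> \<le> 2 / sqrt L * H1_norm_P2 L d"
proof (cases "p = 0")
  case True
  have "H1_norm_P2 L d \<ge> 0" by (rule H_ge(2)[OF L H])
  then show ?thesis using True L by (simp add: bet_def wv_def)
next
  case False
  then have p: "p > 0" by simp
  have c4: "continuous_on {0..L} (d 4)" using H6_cont[OF H, of 4] by simp
  define I where "I = integral {0..L} (\<lambda>x. d 4 x * cos (real p * pi / L * x))"
  have "bet L u0 p = sqrt 2 * (alpha_coef L u0 p * (real p * pi / L)^4)"
    using p by (simp add: bet_def wv_def)
  also have "\<dots> = 2 / L * I" unfolding alpha_d4[OF L H Dm p] I_def by simp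
  finally have b: "bet L u0 p = 2 / L * I" .
  have "\<bar>I\<bar> \<le> integral {0..L} (\<lambda>x. \<bar>d 4 x\<bar>)" unfolding I_def
  proof (rule integral_norm_bound_integral[where 'a=real, unfolded real_norm_def])
    show "(\<lambda>x. d 4 x * cos (real p * pi / L * x)) integrable_on {0..L}"
      by (intro integrable_continuous_interval continuous_intros c4)
    show "(\<lambda>x. \<bar>d 4 x\<bar>) integrable_on {0..L}"
      by (intro integrable_continuous_interval continuous_intros c4)
    show "\<bar>d 4 x * cos (real p * pi / L * x)\<bar> \<le> \<bar>d 4 x\<bar>" for x
      by (simp add: abs_mult mult_left_le)
  qed
  also have "\<dots> \<le> sqrt (L * integral {0..L} (\<lambda>x. (d 4 x)^2))" by (rule l1_le_l2[OF L c4])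
  also have "\<dots> = sqrt L * sqrt (integral {0..L} (\<lambda>x. (d 4 x)^2))" by (simp add: real_sqrt_mult)
  also have "\<dots> \<le> sqrt L * H1_norm_P2 L d" using L by (intro mult_left_mono H_ge(1)[OF L H]) auto
  finally have "\<bar>I\<bar> \<le> sqrt L * H1_norm_P2 L d" .
  then have "\<bar>bet L u0 p\<bar> \<le> 2 / L * (sqrt L * H1_norm_P2 L d)"
    unfolding b using L by (simp add: abs_mult divide_right_mono)
  also have "2 / L * (sqrt L * H1_norm_P2 L d) = 2 / sqrt L * H1_norm_P2 L d"
  proof -
    have sL: "L = sqrt L * sqrt L" using L by simp
    have sp: "sqrt L > 0" using L by simp
    have "2 / L * (sqrt L * H1_norm_P2 L d) = 2 / (sqrt L * sqrt L) * (sqrt L * H1_norm_P2 L d)"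
      using sL by simp
    also have "\<dots> = 2 / sqrt L * H1_norm_P2 L d" using sp by (simp add: field_simps)
    finally show ?thesis .
  qed
  finally show ?thesis .
qed

lemma summable_exp_w:
  assumes L: "L > 0" and s: "s > 0" and m: "m \<le> 4"
  shows "summable (\<lambda>p. (wv L p)^m * exp (-((wv L p)^2 * s)))"
  unfolding wv_eq using summable_exp_poly[of "pi / L" s m] L s m by simp

lemma P2_formula:
  assumes L: "L > 0" and H: "H6_chain L u0 d" and s: "s > 0"
  shows "P2_sol L u0 s x = (\<Sum>p. bet L u0 p * exp (-((wv L p)^2 * s)) * cos (wv L p * x))"
proof -
  obtain A where A: "\<And>p. \<bar>alpha_coef L u0 p\<bar> \<le> A" using alpha_bounded[OF L H] by blast
  define kap where "kap p = (if p = 0 then 1 else sqrt 2::real)" for p :: nat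
  have kap: "\<bar>kap p\<bar> \<le> sqrt 2" for p unfolding kap_def by auto
  define b where "b p = alpha_coef L u0 p * exp (-((wv L p)^2 * s)) * kap p" for p
  have ex: "(real p)^2 * pi^2 * s / L^2 = (wv L p)^2 * s" for p
    unfolding wv_def by (simp add: power_divide power_mult_distrib)
  have hs: "heat_sol L u0 s = (\<lambda>x. \<Sum>p. b p * cos (wv L p * x))"
  proof
    fix x show "heat_sol L u0 s x = (\<Sum>p. b p * cos (wv L p * x))"
      unfolding heat_sol_def b_def cbasis_eq ex kap_def wv_def
      by (intro arg_cong[where f=suminf] ext) (simp add: mult.assoc)
  qed
  have S: "summable (\<lambda>p. \<bar>b p\<bar> * \<bar>wv L p\<bar>^m)" if m: "m \<le> 4" for m
  proof (rule summable_comparison_test[OF _ summable_mult[OF summable_exp_w[OF L s m], of "A * sqrt 2"]])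
    show "\<exists>N. \<forall>n\<ge>N. norm (\<bar>b n\<bar> * \<bar>wv L n\<bar> ^ m) \<le> A * sqrt 2 * ((wv L n)^m * exp (-((wv L n)^2 * s)))"
    proof (intro exI allI impI)
      fix n :: nat
      have w0: "wv L n \<ge> 0" using L unfolding wv_def by simp
      have "\<bar>b n\<bar> = \<bar>alpha_coef L u0 n\<bar> * \<bar>kap n\<bar> * exp (-((wv L n)^2 * s))"
        unfolding b_def by (simp add: abs_mult)
      also have "\<dots> \<le> A * sqrt 2 * exp (-((wv L n)^2 * s))"
        by (intro mult_right_mono mult_mono A kap) (auto intro: order_trans[OF _ A])
      finally have "\<bar>b n\<bar> \<le> A * sqrt 2 * exp (-((wv L n)^2 * s))" .
      then have "\<bar>b n\<bar> * wv L n ^ m \<le> A * sqrt 2 * exp (-((wv L n)^2 * s)) * wv L n ^ m"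
        using w0 by (intro mult_right_mono) auto
      then show "norm (\<bar>b n\<bar> * \<bar>wv L n\<bar> ^ m) \<le> A * sqrt 2 * ((wv L n)^m * exp (-((wv L n)^2 * s)))"
        using w0 by (simp add: mult.commute mult.left_commute)
    qed
  qed
  have D: "(deriv ^^ 4) (\<lambda>x. \<Sum>p. b p * cos (wv L p * x)) = (\<lambda>x. \<Sum>p. (b p * wv L p^4) * cos (wv L p * x))"
    by (rule D4) (rule S)
  have "P2_sol L u0 s x = (\<Sum>p. (b p * wv L p^4) * cos (wv L p * x))"
    unfolding P2_sol_def hs D by simp
  also have "\<dots> = (\<Sum>p. bet L u0 p * exp (-((wv L p)^2 * s)) * cos (wv L p * x))"
    unfolding b_def bet_def kap_def by (intro arg_cong[where f=suminf] ext) (simp only: mult_ac)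
  finally show ?thesis .
qed

lemma E_formula:
  fixes lam a b :: real
  assumes lam: "lam > 0" and ab: "a \<le> b"
  shows "integral {a..b} (\<lambda>s. exp (-(lam * s))) = (exp (-(lam * a)) - exp (-(lam * b))) / lam"
proof -
  have "((\<lambda>s. exp (-(lam * s))) has_integral ((- exp (-(lam * b)) / lam) - (- exp (-(lam * a)) / lam))) {a..b}"
  proof (rule fundamental_theorem_of_calculus[OF ab])
    fix x assume "x \<in> {a..b}"
    show "((\<lambda>s. - exp (-(lam * s)) / lam) has_vector_derivative exp (-(lam * x))) (at x within {a..b})"
      unfolding has_real_derivative_iff_has_vector_derivative[symmetric]
      using lam by (auto intro!: derivative_eq_intros)
  qed
  then show ?thesis by (simp add: integral_unique diff_divide_distrib)
qed

definition Ek :: "real \<Rightarrow> real \<Rightarrow> nat \<Rightarrow> nat \<Rightarrow> real" where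
  "Ek L dt k i = integral {real k * dt..real (Suc k) * dt} (\<lambda>s. exp (-((wv L i)^2 * s)))"

lemma Ek_nonneg: "dt \<ge> 0 \<Longrightarrow> Ek L dt k i \<ge> 0"
  unfolding Ek_def
  by (intro integral_nonneg integrable_continuous_interval continuous_intros) auto

lemma bet0: "bet L u0 0 = 0" by (simp add: bet_def wv_def)

lemma Ek_sum:
  assumes L: "L > 0" and dt: "dt > 0" and i: "i > 0"
  shows "(\<Sum>k<n. Ek L dt k i) \<le> (L / pi)^2 * inverse (real i ^ 2)"
proof -
  define lam where "lam = (wv L i)^2"
  have lam: "lam > 0" using L i unfolding lam_def wv_def by simp
  define F where "F k = exp (-(lam * (real k * dt)))" for k :: nat
  have "Ek L dt k i = (F k - F (Suc k)) / lam" for k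
    unfolding Ek_def F_def lam_def[symmetric]
    using E_formula[OF lam, of "real k * dt" "real (Suc k) * dt"] dt by (simp add: mult.commute)
  then have "(\<Sum>k<n. Ek L dt k i) = (\<Sum>k<n. F k - F (Suc k)) / lam" by (simp add: sum_divide_distrib)
  also have "\<dots> = (F 0 - F n) / lam" by (simp only: sum_lessThan_telescope')
  also have "\<dots> \<le> 1 / lam" using lam by (intro divide_right_mono) (auto simp: F_def)
  also have "1 / lam = (L / pi)^2 * inverse (real i ^ 2)"
    unfolding lam_def wv_def using L by (simp add: field_simps power_mult_distrib)
  finally show ?thesis .
qed

lemma Tsum_le:
  assumes L: "L > 0" and H: "H6_chain L u0 d" and Dm: "dom_conditions L d" and dt: "dt > 0"
  shows "(\<Sum>k<n. dt * \<bar>bet L u0 i\<bar> * Ek L dt k i) \<le> dt * (2 / sqrt L * H1_norm_P2 L d) * ((L / pi)^2 * inverse (real i ^ 2))"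
proof (cases "i = 0")
  case True then show ?thesis using H_ge(2)[OF L H] L dt by (simp add: bet0)
next
  case False
  have "(\<Sum>k<n. dt * \<bar>bet L u0 i\<bar> * Ek L dt k i) = dt * \<bar>bet L u0 i\<bar> * (\<Sum>k<n. Ek L dt k i)"
    by (simp add: sum_distrib_left)
  also have "\<dots> \<le> dt * (2 / sqrt L * H1_norm_P2 L d) * ((L / pi)^2 * inverse (real i ^ 2))"
    using dt bet_bound[OF L H Dm, of i] Ek_sum[OF L dt, of i n] False Ek_nonneg[of dt L] H_ge(2)[OF L H] L
    by (intro mult_mono) (auto intro!: sum_nonneg)
  finally show ?thesis .
qed

lemma T_le:
  assumes L: "L > 0" and H: "H6_chain L u0 d" and Dm: "dom_conditions L d" and dt: "dt > 0"
  shows "dt * \<bar>bet L u0 i\<bar> * Ek L dt k i \<le> dt * (2 / sqrt L * H1_norm_P2 L d) * ((L / pi)^2 * inverse (real i ^ 2))"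
proof -
  have "dt * \<bar>bet L u0 i\<bar> * Ek L dt k i \<le> (\<Sum>k'<Suc k. dt * \<bar>bet L u0 i\<bar> * Ek L dt k' i)"
    using dt Ek_nonneg[of dt L] by (simp add: sum_nonneg)
  also have "\<dots> \<le> dt * (2 / sqrt L * H1_norm_P2 L d) * ((L / pi)^2 * inverse (real i ^ 2))" by (rule Tsum_le[OF L H Dm dt])
  finally show ?thesis .
qed

lemma summable_T:
  assumes L: "L > 0" and H: "H6_chain L u0 d" and Dm: "dom_conditions L d" and dt: "dt > 0"
  shows "summable (\<lambda>i. dt * \<bar>bet L u0 i\<bar> * Ek L dt k i)"
proof (rule summable_comparison_test[OF _ summable_mult[OF summable_inv_sq, of "dt * (2 / sqrt L * H1_norm_P2 L d) * (L / pi)^2"]])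
  show "\<exists>N. \<forall>n\<ge>N. norm (dt * \<bar>bet L u0 n\<bar> * Ek L dt k n) \<le> dt * (2 / sqrt L * H1_norm_P2 L d) * (L / pi)\<^sup>2 * inverse (real n ^ 2)"
    using T_le[OF L H Dm dt] dt Ek_nonneg[of dt L] by (auto simp: mult.assoc)
qed

lemma LB_lborel:
  fixes a b :: real
  assumes "a \<le> b"
  shows "(LBINT s=a..b. F s) = integral\<^sup>L lborel (\<lambda>s. indicator {a<..<b} s *\<^sub>R F s)"
  using assms by (simp add: interval_lebesgue_integral_def set_lebesgue_integral_def)

lemma eps_bound:
  assumes L: "L > 0" and H: "H6_chain L u0 d" and Dm: "dom_conditions L d" and dt: "dt > 0"
  shows "\<bar>eps2 L u0 J dt k j\<bar> \<le> (\<Sum>i. dt * \<bar>bet L u0 i\<bar> * Ek L dt k i)"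
proof -
  define a where "a = real k * dt"
  define b where "b = real (Suc k) * dt"
  define x where "x = real j * dxJ L J"
  define B where "B = 2 / sqrt L * H1_norm_P2 L d"
  have B0: "B \<ge> 0" unfolding B_def using H_ge(2)[OF L H] L by simp
  have betB: "\<bar>bet L u0 i\<bar> \<le> B" for i unfolding B_def by (rule bet_bound[OF L H Dm])
  have a0: "a \<ge> 0" and ab: "a < b" and bad: "b - a = dt" using dt unfolding a_def b_def by (auto simp: algebra_simps)
  define g where "g i s = (b - s) * (bet L u0 i * exp (-((wv L i)^2 * s)) * cos (wv L i * x))" for i s
  have gc: "continuous_on {a..b} (g i)" for i unfolding g_def by (intro continuous_intros)
  have gbound: "\<bar>g i s\<bar> \<le> dt * \<bar>bet L u0 i\<bar> * exp (-((wv L i)^2 * s))" if s: "s \<in> {a..b}" for i s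
  proof -
    have "\<bar>b - s\<bar> \<le> dt" using s bad by auto
    moreover have "\<bar>cos (wv L i * x)\<bar> \<le> 1" by simp
    ultimately have "\<bar>b - s\<bar> * (\<bar>bet L u0 i\<bar> * exp (-((wv L i)^2 * s)) * \<bar>cos (wv L i * x)\<bar>)
        \<le> dt * (\<bar>bet L u0 i\<bar> * exp (-((wv L i)^2 * s)) * 1)"
      by (intro mult_mono) auto
    then show ?thesis unfolding g_def by (simp add: abs_mult mult.assoc)
  qed
  have summ_s: "summable (\<lambda>i. bet L u0 i * exp (-((wv L i)^2 * s)) * cos (wv L i * x))" if s: "s > 0" for s
  proof (rule summable_comparison_test[OF _ summable_mult[OF summable_exp_w[OF L s zero_le], of B]])
    show "\<exists>N. \<forall>n\<ge>N. norm (bet L u0 n * exp (-((wv L n)^2 * s)) * cos (wv L n * x)) \<le> B * ((wv L n)^0 * exp (-((wv L n)^2 * s)))"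
    proof (intro exI allI impI)
      fix n :: nat
      have "\<bar>bet L u0 n\<bar> * exp (-((wv L n)^2 * s)) * \<bar>cos (wv L n * x)\<bar> \<le> B * exp (-((wv L n)^2 * s)) * 1"
        using betB B0 by (intro mult_mono) auto
      then show "norm (bet L u0 n * exp (-((wv L n)^2 * s)) * cos (wv L n * x)) \<le> B * ((wv L n)^0 * exp (-((wv L n)^2 * s)))"
        by (simp add: abs_mult)
    qed
  qed
  have "eps2 L u0 J dt k j = (LBINT s=a..b. (\<Sum>i. g i s))"
    unfolding eps2_def a_def[symmetric] b_def[symmetric] x_def[symmetric]
  proof (rule interval_integral_cong)
    fix s assume "s \<in> einterval (min (ereal a) (ereal b)) (max (ereal a) (ereal b))"
    then have s: "a < s" "s < b" using ab by (auto simp: min_def max_def)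
    then have s0: "s > 0" using a0 by simp
    show "(b - s) * P2_sol L u0 s x = (\<Sum>i. g i s)"
      unfolding P2_formula[OF L H s0] g_def using suminf_mult[OF summ_s[OF s0], of "b - s"] by simp
  qed
  also have "\<dots> = integral\<^sup>L lborel (\<lambda>s. indicator {a<..<b} s *\<^sub>R (\<Sum>i. g i s))"
    using ab by (intro LB_lborel) simp
  also have "\<dots> = integral\<^sup>L lborel (\<lambda>s. \<Sum>i. indicator {a<..<b} s *\<^sub>R g i s)"
  proof (intro Bochner_Integration.integral_cong refl)
    fix s show "indicator {a<..<b} s *\<^sub>R (\<Sum>i. g i s) = (\<Sum>i. indicator {a<..<b} s *\<^sub>R g i s)"
      by (cases "s \<in> {a<..<b}") auto
  qed
  finally have eq1: "eps2 L u0 J dt k j = integral\<^sup>L lborel (\<lambda>s. \<Sum>i. indicator {a<..<b} s *\<^sub>R g i s)" .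
  define f where "f i s = indicator {a<..<b} s *\<^sub>R g i s" for i s
  have fint: "integrable lborel (f i)" for i
  proof -
    have "set_integrable lborel {a<..<b} (g i)"
      by (rule set_integrable_subset[OF borel_integrable_atLeastAtMost'[OF gc]]) auto
    then show ?thesis unfolding f_def set_integrable_def .
  qed
  have fnorm: "integral\<^sup>L lborel (\<lambda>s. norm (f i s)) \<le> dt * \<bar>bet L u0 i\<bar> * Ek L dt k i" for i
  proof -
    have "integral\<^sup>L lborel (\<lambda>s. norm (f i s)) = integral\<^sup>L lborel (\<lambda>s. indicator {a<..<b} s *\<^sub>R \<bar>g i s\<bar>)"
      unfolding f_def by (intro Bochner_Integration.integral_cong refl) (simp add: indicator_def)
    also have "\<dots> = (LBINT s=a..b. \<bar>g i s\<bar>)" using ab by (intro LB_lborel[symmetric]) simp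
    also have "\<dots> = integral {a..b} (\<lambda>s. \<bar>g i s\<bar>)" using ab by (intro LB_eq continuous_intros gc) simp
    also have "\<dots> \<le> integral {a..b} (\<lambda>s. dt * \<bar>bet L u0 i\<bar> * exp (-((wv L i)^2 * s)))"
      by (intro integral_le integrable_continuous_interval continuous_intros gc gbound) auto
    also have "\<dots> = dt * \<bar>bet L u0 i\<bar> * Ek L dt k i"
      unfolding Ek_def a_def[symmetric] b_def[symmetric] by (simp add: integral_mult_right)
    finally show ?thesis .
  qed
  have sT: "summable (\<lambda>i. dt * \<bar>bet L u0 i\<bar> * Ek L dt k i)" by (rule summable_T[OF L H Dm dt])
  have AEs: "AE s in lborel. summable (\<lambda>i. norm (f i s))"
  proof (rule AE_I2)
    fix s show "summable (\<lambda>i. norm (f i s))"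
    proof (cases "s \<in> {a<..<b}")
      case True
      then have s0: "s > 0" using a0 by simp
      show ?thesis
      proof (rule summable_comparison_test[OF _ summable_mult[OF summable_exp_w[OF L s0 zero_le], of "dt * B"]])
        show "\<exists>N. \<forall>n\<ge>N. norm (norm (f n s)) \<le> dt * B * ((wv L n)^0 * exp (-((wv L n)^2 * s)))"
        proof (intro exI allI impI)
          fix n :: nat
          have "\<bar>g n s\<bar> \<le> dt * \<bar>bet L u0 n\<bar> * exp (-((wv L n)^2 * s))" using True by (intro gbound) auto
          also have "\<dots> \<le> dt * B * exp (-((wv L n)^2 * s))" using dt betB B0 by (intro mult_mono) auto
          finally show "norm (norm (f n s)) \<le> dt * B * ((wv L n)^0 * exp (-((wv L n)^2 * s)))"
            using True by (simp add: f_def)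
        qed
      qed
    next
      case False then show ?thesis by (simp add: f_def)
    qed
  qed
  have sI: "summable (\<lambda>i. integral\<^sup>L lborel (\<lambda>s. norm (f i s)))"
  proof (rule summable_comparison_test[OF _ sT])
    show "\<exists>N. \<forall>n\<ge>N. norm (integral\<^sup>L lborel (\<lambda>s. norm (f n s))) \<le> dt * \<bar>bet L u0 n\<bar> * Ek L dt k n"
      using fnorm by (auto intro!: integral_nonneg_AE)
  qed
  have "eps2 L u0 J dt k j = (\<Sum>i. integral\<^sup>L lborel (f i))"
    unfolding eq1 f_def[symmetric] by (rule integral_suminf[OF fint AEs sI])
  also have "\<bar>\<dots>\<bar> \<le> (\<Sum>i. dt * \<bar>bet L u0 i\<bar> * Ek L dt k i)"
  proof (rule norm_suminf_le[where 'a=real, unfolded real_norm_def, OF _ sT])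
    fix i
      have h1: "norm (integral\<^sup>L lborel (f i)) \<le> integral\<^sup>L lborel (\<lambda>s. norm (f i s))" by (rule integral_norm_bound)
      show "\<bar>integral\<^sup>L lborel (f i)\<bar> \<le> dt * \<bar>bet L u0 i\<bar> * Ek L dt k i"
        using h1 fnorm[of i] unfolding real_norm_def by linarith
  qed
  finally show ?thesis .
qed

theorem proposition3p8:
  fixes L :: real
  assumes "L > 0"
  shows "\<exists>C>0. \<forall>u0 d dt J n.
     H6_chain L u0 d \<and> dom_conditions L d \<and>
     0 < dt \<and> dt < 1 \<and> J \<ge> 2 \<and> dt / (dxJ L J)^2 \<le> 1/2 \<and> n \<ge> 1 \<longrightarrow>
     l2norm J (\<lambda>j. \<Sum>k<n. ((euler_step J (dxJ L J) dt) ^^ (n - 1 - k)) (eps2 L u0 J dt k) j)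
       \<le> C * dt * H1_norm_P2 L d"
proof -
  note L = assms
  define S2 where "S2 = (\<Sum>i. inverse (real i ^ 2))"
  have S20: "S2 \<ge> 0" unfolding S2_def by (intro suminf_nonneg summable_inv_sq) simp
  define K where "K = 2 / sqrt L * (L / pi)^2 * S2"
  have K0: "K \<ge> 0" unfolding K_def using L S20 by simp
  show ?thesis
  proof (intro exI[of _ "K + 1"] conjI allI impI)
    show "K + 1 > 0" using K0 by simp
    fix u0 :: "real \<Rightarrow> real" and d :: "nat \<Rightarrow> real \<Rightarrow> real" and dt :: real and J n :: nat
    assume hyp: "H6_chain L u0 d \<and> dom_conditions L d \<and>
     0 < dt \<and> dt < 1 \<and> J \<ge> 2 \<and> dt / (dxJ L J)^2 \<le> 1/2 \<and> n \<ge> 1"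
    then have H: "H6_chain L u0 d" and Dm: "dom_conditions L d" and dt: "0 < dt" and J: "J \<ge> 2"
      and r: "dt / (dxJ L J)^2 \<le> 1/2" by auto
    define Hn where "Hn = H1_norm_P2 L d"
    have Hn0: "Hn \<ge> 0" unfolding Hn_def by (rule H_ge(2)[OF L H])
    define M where "M k = (\<Sum>i. dt * \<bar>bet L u0 i\<bar> * Ek L dt k i)" for k
    have dx: "dxJ L J \<noteq> 0" unfolding dxJ_def using L J by simp
    have Mb: "\<bar>((euler_step J (dxJ L J) dt) ^^ (n - 1 - k)) (eps2 L u0 J dt k) j\<bar> \<le> M k" if j: "j < J" for k j
      by (rule euler_stable_pow[OF J _ r dx _ j]) (use dt eps_bound[OF L H Dm dt] in \<open>auto simp: M_def\<close>)
    have "(\<Sum>k<n. M k) = (\<Sum>i. \<Sum>k<n. dt * \<bar>bet L u0 i\<bar> * Ek L dt k i)"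
      unfolding M_def by (rule suminf_sum[symmetric]) (rule summable_T[OF L H Dm dt])
    also have "\<dots> \<le> (\<Sum>i. dt * (2 / sqrt L * Hn) * ((L / pi)^2 * inverse (real i ^ 2)))"
    proof (rule suminf_le)
      show "\<And>i. (\<Sum>k<n. dt * \<bar>bet L u0 i\<bar> * Ek L dt k i) \<le> dt * (2 / sqrt L * Hn) * ((L / pi)^2 * inverse (real i ^ 2))"
        unfolding Hn_def by (rule Tsum_le[OF L H Dm dt])
      show "summable (\<lambda>i. \<Sum>k<n. dt * \<bar>bet L u0 i\<bar> * Ek L dt k i)"
        by (rule summable_sum) (rule summable_T[OF L H Dm dt])
      show "summable (\<lambda>i. dt * (2 / sqrt L * Hn) * ((L / pi)^2 * inverse (real i ^ 2)))"
        by (intro summable_mult summable_inv_sq)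
    qed
    also have "\<dots> = (\<Sum>i. (dt * (2 / sqrt L * Hn) * (L / pi)^2) * inverse (real i ^ 2))"
      by (simp only: mult.assoc)
    also have "\<dots> = (dt * (2 / sqrt L * Hn) * (L / pi)^2) * S2"
      unfolding S2_def by (rule suminf_mult[OF summable_inv_sq])
    also have "\<dots> = dt * (2 / sqrt L * Hn) * ((L / pi)^2 * S2)"
      by (simp only: mult.assoc)
    also have "\<dots> = K * dt * Hn" unfolding K_def by (simp add: mult_ac)
    finally have Ms: "(\<Sum>k<n. M k) \<le> K * dt * Hn" .
    have "l2norm J (\<lambda>j. \<Sum>k<n. ((euler_step J (dxJ L J) dt) ^^ (n - 1 - k)) (eps2 L u0 J dt k) j) \<le> (\<Sum>k<n. M k)"
    proof (rule l2norm_le)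
      show "J > 0" using J by simp
      fix j assume j: "j < J"
      have "\<bar>\<Sum>k<n. ((euler_step J (dxJ L J) dt) ^^ (n - 1 - k)) (eps2 L u0 J dt k) j\<bar>
          \<le> (\<Sum>k<n. \<bar>((euler_step J (dxJ L J) dt) ^^ (n - 1 - k)) (eps2 L u0 J dt k) j\<bar>)"
        by (rule sum_abs)
      also have "\<dots> \<le> (\<Sum>k<n. M k)" by (intro sum_mono Mb j)
      finally show "\<bar>\<Sum>k<n. ((euler_step J (dxJ L J) dt) ^^ (n - 1 - k)) (eps2 L u0 J dt k) j\<bar> \<le> (\<Sum>k<n. M k)" .
    qed
    also have "\<dots> \<le> K * dt * Hn" by (rule Ms)
    also have "\<dots> \<le> (K + 1) * dt * Hn" using dt Hn0 by (simp add: distrib_right)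
    finally show "l2norm J (\<lambda>j. \<Sum>k<n. ((euler_step J (dxJ L J) dt) ^^ (n - 1 - k)) (eps2 L u0 J dt k) j)
       \<le> (K + 1) * dt * H1_norm_P2 L d" unfolding Hn_def .
  qed
qed

end
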